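(* Let $\mathcal{N}$ be a nonzero Gaussian integer and let $y,z$ be real numbers with $y\ge z\ge 2$. Then $$T_1\le \sum_{\mathfrak q:\ z\le N(\mathfrak q)<y} S(\mathcal{A}_{\mathfrak q},\mathcal{P},z)+O\!\left(\frac{N(\mathcal{N})}{z}\right),$$ where $\mathfrak q$ runs over prime ideals, $\mathcal{A}_{\mathfrak q}=\{n\in\mathcal{A}:\ \mathfrak q\mid (n)\}$, and the implied constant is absolute.
   Context: $\mathbb{Z}[i]$ is the ring of Gaussian integers, $N$ the norm. $\mathcal{P}$ is the set of Gaussian primes (prime elements) not dividing $\mathcal{N}$; $\mathcal{A}=\{\mathcal{N}-p:\ p\in\mathcal{P},\ N(p)<N(\mathcal{N})\}$. For $w\ge2$, $P(w)$ is the product of the distinct prime ideals $(p)$, $p\in\mathcal{P}$, $N(p)<w$. For finite $\mathcal{B}\subset\mathbb{Z}[i]$, $S(\mathcal{B},\mathcal{P},w)=\#\{n\in\mathcal{B}:\ (n)+P(w)=\mathbb{Z}[i]\}$. $T_1=\sum_{n\in\mathcal{A},\ (n)+P(z)=\mathbb{Z}[i]}\ \sum_{\mathfrak q:\ z\le N(\mathfrak q)<y,\ \mathfrak q^k\|(n)}k$, summing over prime ideals $\mathfrak q$ dividing $(n)$ with $k$ the exact exponent. *)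

theory Defs
  imports Complex_Main
begin

definition ZI :: "complex set" where
  "ZI = {a. Re a \<in> \<int> \<and> Im a \<in> \<int>}"

definition gdvd :: "complex \<Rightarrow> complex \<Rightarrow> bool" where
  "gdvd a b \<longleftrightarrow> a \<in> ZI \<and> b \<in> ZI \<and> (\<exists>c\<in>ZI. b = a * c)"

definition gnorm :: "complex \<Rightarrow> real" where
  "gnorm a = (Re a)\<^sup>2 + (Im a)\<^sup>2"

definition gunit :: "complex \<Rightarrow> bool" where
  "gunit a \<longleftrightarrow> gdvd a 1"

definition gprime :: "complex \<Rightarrow> bool" where
  "gprime p \<longleftrightarrow> p \<in> ZI \<and> p \<noteq> 0 \<and> \<not> gunit p \<and>
     (\<forall>a\<in>ZI. \<forall>b\<in>ZI. gdvd p (a * b) \<longrightarrow> gdvd p a \<or> gdvd p b)"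

definition is_gideal :: "complex set \<Rightarrow> bool" where
  "is_gideal I \<longleftrightarrow> I \<subseteq> ZI \<and> 0 \<in> I \<and> (\<forall>a\<in>I. \<forall>b\<in>I. a + b \<in> I \<and> - a \<in> I) \<and>
     (\<forall>a\<in>I. \<forall>c\<in>ZI. c * a \<in> I)"

definition gideal :: "complex \<Rightarrow> complex set" where
  "gideal a = {a * c | c. c \<in> ZI}"

text \<open>Prime ideals of Z[i] (the zero ideal included; it has norm 0 below
and never occurs in the sums of the statement).\<close>
definition is_prime_gideal :: "complex set \<Rightarrow> bool" where
  "is_prime_gideal P \<longleftrightarrow> is_gideal P \<and> P \<noteq> ZI \<and>
     (\<forall>a\<in>ZI. \<forall>b\<in>ZI. a * b \<in> P \<longrightarrow> a \<in> P \<or> b \<in> P)"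

definition ideal_norm :: "complex set \<Rightarrow> real" where
  "ideal_norm I = real (card (ZI // {(a, b). a \<in> ZI \<and> b \<in> ZI \<and> a - b \<in> I}))"

definition ideal_sum :: "complex set \<Rightarrow> complex set \<Rightarrow> complex set" where
  "ideal_sum I J = {a + b | a b. a \<in> I \<and> b \<in> J}"

definition ideal_mult :: "complex set \<Rightarrow> complex set \<Rightarrow> complex set" where
  "ideal_mult I J = \<Inter> {K. is_gideal K \<and> {a * b | a b. a \<in> I \<and> b \<in> J} \<subseteq> K}"

primrec ideal_pow :: "complex set \<Rightarrow> nat \<Rightarrow> complex set" where
  "ideal_pow I 0 = ZI"
| "ideal_pow I (Suc k) = ideal_mult I (ideal_pow I k)"

definition ideal_exp :: "complex set \<Rightarrow> complex \<Rightarrow> nat" where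
  "ideal_exp q n = (GREATEST k. gideal n \<subseteq> ideal_pow q k)"

definition Pset :: "complex \<Rightarrow> complex set" where
  "Pset NN = {p. gprime p \<and> \<not> gdvd p NN}"

definition Aset :: "complex \<Rightarrow> complex set" where
  "Aset NN = {NN - p | p. p \<in> Pset NN \<and> gnorm p < gnorm NN}"

text \<open>P(w): product of the distinct prime ideals (p), p in \<P>, N(p) < w.
Each of these ideals is principal; their product is generated by the
product of (chosen) generators.\<close>
definition PP :: "complex \<Rightarrow> real \<Rightarrow> complex set" where
  "PP NN w = gideal (\<Prod>q\<in>{gideal p | p. p \<in> Pset NN \<and> gnorm p < w}.
                       (SOME a. q = gideal a))"

definition sift :: "complex set \<Rightarrow> complex \<Rightarrow> real \<Rightarrow> nat" where
  "sift B NN w = card {n \<in> B. ideal_sum (gideal n) (PP NN w) = ZI}"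

definition Aq :: "complex \<Rightarrow> complex set \<Rightarrow> complex set" where
  "Aq NN q = {n \<in> Aset NN. gideal n \<subseteq> q}"

definition T1 :: "complex \<Rightarrow> real \<Rightarrow> real \<Rightarrow> real" where
  "T1 NN z y = (\<Sum>n\<in>{n \<in> Aset NN. ideal_sum (gideal n) (PP NN z) = ZI}.
      \<Sum>q\<in>{q. is_prime_gideal q \<and> z \<le> ideal_norm q \<and> ideal_norm q < y \<and> gideal n \<subseteq> q}.
        real (ideal_exp q n))"

end

theory Submission
  imports Defs
begin

lemma ZI_iff: "x \<in> ZI \<longleftrightarrow> (\<exists>a b. x = Complex (of_int a) (of_int b))"
proof
  assume "x \<in> ZI"
  then obtain a b where "Re x = of_int a" "Im x = of_int b"
    unfolding ZI_def by (auto elim!: Ints_cases)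
  then show "\<exists>a b. x = Complex (of_int a) (of_int b)"
    by (metis complex_surj)
qed (auto simp: ZI_def)

lemma ZI_add[simp,intro]: "a \<in> ZI \<Longrightarrow> b \<in> ZI \<Longrightarrow> a + b \<in> ZI"
  by (auto simp: ZI_def)
lemma ZI_diff[simp,intro]: "a \<in> ZI \<Longrightarrow> b \<in> ZI \<Longrightarrow> a - b \<in> ZI"
  by (auto simp: ZI_def)
lemma ZI_mult[simp,intro]: "a \<in> ZI \<Longrightarrow> b \<in> ZI \<Longrightarrow> a * b \<in> ZI"
  by (auto simp: ZI_def)
lemma ZI_uminus[simp,intro]: "a \<in> ZI \<Longrightarrow> - a \<in> ZI"
  by (auto simp: ZI_def)
lemma ZI_0[simp,intro]: "0 \<in> ZI" and ZI_1[simp,intro]: "1 \<in> ZI"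
  by (auto simp: ZI_def)
lemma ZI_of_int[simp,intro]: "of_int k \<in> ZI"
  by (auto simp: ZI_def)
lemma ZI_cnj[simp,intro]: "a \<in> ZI \<Longrightarrow> cnj a \<in> ZI"
  by (auto simp: ZI_def)
lemma ZI_power[simp,intro]: "a \<in> ZI \<Longrightarrow> a ^ k \<in> ZI"
  by (induction k) auto

lemma gnorm_cmod: "gnorm x = (cmod x)^2"
  by (simp add: gnorm_def cmod_power2)
lemma gnorm_mult: "gnorm (a*b) = gnorm a * gnorm b"
  by (simp add: gnorm_cmod norm_mult power_mult_distrib)
lemma gnorm_power: "gnorm (a^k) = gnorm a ^ k"
  by (simp add: gnorm_cmod norm_power power_mult[symmetric] mult.commute)
lemma gnorm_nonneg: "0 \<le> gnorm x"
  by (simp add: gnorm_cmod)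
lemma gnorm_nat: "x \<in> ZI \<Longrightarrow> \<exists>k::nat. gnorm x = real k"
proof -
  assume "x \<in> ZI"
  then obtain a b where x: "x = Complex (of_int a) (of_int b)" by (auto simp: ZI_iff)
  have "gnorm x = real (nat (a^2 + b^2))" by (simp add: x gnorm_def)
  then show ?thesis by blast
qed
lemma gnorm_ge1: "x \<in> ZI \<Longrightarrow> x \<noteq> 0 \<Longrightarrow> 1 \<le> gnorm x"
proof -
  assume a: "x \<in> ZI" "x \<noteq> 0"
  then obtain k::nat where k: "gnorm x = real k" using gnorm_nat by blast
  have "gnorm x \<noteq> 0" using a by (simp add: gnorm_cmod)
  then show ?thesis using k by simp
qed
lemma gnorm_ge2: "x \<in> ZI \<Longrightarrow> 1 < gnorm x \<Longrightarrow> 2 \<le> gnorm x"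
proof -
  assume a: "x \<in> ZI" "1 < gnorm x"
  then obtain k::nat where k: "gnorm x = real k" using gnorm_nat by blast
  then show ?thesis using a by simp
qed

lemma cmod_ge1: "x \<in> ZI \<Longrightarrow> x \<noteq> 0 \<Longrightarrow> 1 \<le> cmod x"
proof -
  assume "x \<in> ZI" "x \<noteq> 0"
  then have "1\<^sup>2 \<le> (cmod x)\<^sup>2" using gnorm_ge1[of x] by (simp add: gnorm_cmod)
  then show ?thesis by (rule power2_le_imp_le) simp
qed

lemma ZI_div:
  assumes "a \<in> ZI" "b \<in> ZI" "b \<noteq> 0"
  shows "\<exists>c\<in>ZI. gnorm (a - b*c) \<le> gnorm b / 2"
proof -
  define w where "w = a / b"
  define c where "c = Complex (of_int (round (Re w))) (of_int (round (Im w)))"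
  have cZ: "c \<in> ZI" by (auto simp: c_def ZI_def)
  have "a - b*c = b * (w - c)" using assms(3) by (simp add: w_def field_simps)
  hence "gnorm (a - b*c) = gnorm b * gnorm (w - c)" by (simp add: gnorm_mult)
  moreover have "gnorm (w - c) \<le> 1/2"
  proof -
    have h1: "\<bar>of_int (round (Re w)) - Re w\<bar> \<le> 1/2" by (rule of_int_round_abs_le)
    have h2: "\<bar>of_int (round (Im w)) - Im w\<bar> \<le> 1/2" by (rule of_int_round_abs_le)
    have "\<bar>of_int (round (Re w)) - Re w\<bar>^2 \<le> (1/2)^2"
      using h1 by (intro power_mono) auto
    hence "(Re w - of_int (round (Re w)))^2 \<le> 1/4"
      by (simp add: power2_commute power_divide)
    moreover have "\<bar>of_int (round (Im w)) - Im w\<bar>^2 \<le> (1/2)^2"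
      using h2 by (intro power_mono) auto
    hence "(Im w - of_int (round (Im w)))^2 \<le> 1/4"
      by (simp add: power2_commute power_divide)
    ultimately show ?thesis by (simp add: gnorm_def c_def)
  qed
  ultimately have "gnorm (a - b*c) \<le> gnorm b * (1/2)"
    using gnorm_nonneg[of b] by (metis mult_left_mono)
  then show ?thesis using cZ by auto
qed



lemma ZI_box_sub:
  "{x\<in>ZI. cmod x \<le> r} \<subseteq> (\<lambda>(a,b). Complex (of_int a) (of_int b)) ` ({-\<lfloor>r\<rfloor>..\<lfloor>r\<rfloor>} \<times> {-\<lfloor>r\<rfloor>..\<lfloor>r\<rfloor>})"
proof
  fix x assume "x \<in> {x\<in>ZI. cmod x \<le> r}"
  then obtain a b where x: "x = Complex (of_int a) (of_int b)" and r: "cmod x \<le> r" by (auto simp: ZI_iff)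
  have "\<bar>of_int a\<bar> \<le> r" using abs_Re_le_cmod[of x] r x by simp
  hence "\<bar>a\<bar> \<le> \<lfloor>r\<rfloor>" by (simp add: le_floor_iff)
  moreover have "\<bar>of_int b\<bar> \<le> r" using abs_Im_le_cmod[of x] r x by simp
  hence "\<bar>b\<bar> \<le> \<lfloor>r\<rfloor>" by (simp add: le_floor_iff)
  ultimately show "x \<in> (\<lambda>(a,b). Complex (of_int a) (of_int b)) ` ({-\<lfloor>r\<rfloor>..\<lfloor>r\<rfloor>} \<times> {-\<lfloor>r\<rfloor>..\<lfloor>r\<rfloor>})"
    using x by (auto intro!: image_eqI[where x="(a,b)"])
qed

lemma ZI_box_finite: "finite {x\<in>ZI. cmod x \<le> r}"
  by (rule finite_subset[OF ZI_box_sub]) auto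

lemma ZI_box_card:
  assumes "0 \<le> r"
  shows "real (card {x\<in>ZI. cmod x \<le> r}) \<le> (2*r+1)^2"
proof -
  let ?L = "\<lfloor>r\<rfloor>"
  have "card {x\<in>ZI. cmod x \<le> r} \<le> card ((\<lambda>(a,b). Complex (of_int a) (of_int b)) ` ({-?L..?L} \<times> {-?L..?L}))"
    by (rule card_mono[OF _ ZI_box_sub]) auto
  also have "\<dots> \<le> card ({-?L..?L} \<times> {-?L..?L})" by (rule card_image_le) auto
  also have "\<dots> = (nat (2*?L+1))^2" by (simp add: card_cartesian_product power2_eq_square)
  finally have "real (card {x\<in>ZI. cmod x \<le> r}) \<le> real ((nat (2*?L+1))^2)" by linarith
  also have "\<dots> = (of_int (2*?L+1))^2" using assms by simp
  also have "\<dots> \<le> (2*r+1)^2"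
  proof -
    have "of_int ?L \<le> r" "0 \<le> ?L" using assms by auto
    then show ?thesis by (intro power_mono) auto
  qed
  finally show ?thesis .
qed

lemma mult_count:
  assumes m: "m \<in> ZI" "m \<noteq> 0"
  shows "real (card {n\<in>ZI. n \<noteq> 0 \<and> cmod n < R \<and> (\<exists>c\<in>ZI. n = m*c)}) \<le> 9 * R^2 / gnorm m"
proof -
  define \<rho> where "\<rho> = R / cmod m"
  have cm: "cmod m > 0" using m by simp
  let ?C = "{c\<in>ZI. c \<noteq> 0 \<and> cmod c \<le> \<rho>}"
  have sub: "{n\<in>ZI. n \<noteq> 0 \<and> cmod n < R \<and> (\<exists>c\<in>ZI. n = m*c)} \<subseteq> (\<lambda>c. m*c) ` ?C"
  proof
    fix n assume "n \<in> {n\<in>ZI. n \<noteq> 0 \<and> cmod n < R \<and> (\<exists>c\<in>ZI. n = m*c)}"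
    then obtain c where c: "c \<in> ZI" "n = m*c" "n \<noteq> 0" "cmod n < R" by auto
    have "cmod m * cmod c < R" using c by (simp add: norm_mult)
    hence "cmod c \<le> \<rho>" using cm by (simp add: \<rho>_def field_simps)
    then show "n \<in> (\<lambda>c. m*c) ` ?C" using c by auto
  qed
  have finC: "finite ?C" by (rule finite_subset[OF _ ZI_box_finite[of \<rho>]]) auto
  have "card {n\<in>ZI. n \<noteq> 0 \<and> cmod n < R \<and> (\<exists>c\<in>ZI. n = m*c)} \<le> card ((\<lambda>c. m*c) ` ?C)"
    by (rule card_mono[OF _ sub]) (use finC in auto)
  also have "\<dots> \<le> card ?C" by (rule card_image_le[OF finC])
  finally have le1: "card {n\<in>ZI. n \<noteq> 0 \<and> cmod n < R \<and> (\<exists>c\<in>ZI. n = m*c)} \<le> card ?C" .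
  show ?thesis
  proof (cases "?C = {}")
    case True
    have "card ?C = 0" using True by (metis card.empty)
    then show ?thesis using le1 by (simp add: gnorm_nonneg)
  next
    case False
    then obtain c where c: "c \<in> ZI" "c \<noteq> 0" "cmod c \<le> \<rho>" by auto
    have r1: "1 \<le> \<rho>" using cmod_ge1[OF c(1,2)] c(3) by linarith
    have "real (card ?C) \<le> real (card {x\<in>ZI. cmod x \<le> \<rho>})"
      by (simp, rule card_mono[OF ZI_box_finite]) auto
    also have "\<dots> \<le> (2*\<rho>+1)^2" using r1 by (intro ZI_box_card) simp
    also have "\<dots> \<le> (3*\<rho>)^2" using r1 by (intro power_mono) auto
    also have "\<dots> = 9 * R^2 / gnorm m" using cm by (simp add: \<rho>_def gnorm_cmod power_divide field_simps)
    finally show ?thesis using le1 by linarith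
  qed
qed



lemma gideal_iff: "x \<in> gideal a \<longleftrightarrow> (\<exists>c\<in>ZI. x = a*c)"
  by (auto simp: gideal_def)

lemma gideal_sub_ZI: "a \<in> ZI \<Longrightarrow> gideal a \<subseteq> ZI"
  by (auto simp: gideal_iff)

lemma is_gideal_gideal: "a \<in> ZI \<Longrightarrow> is_gideal (gideal a)"
proof -
  assume a: "a \<in> ZI"
  have 1: "gideal a \<subseteq> ZI" using a by (auto simp: gideal_iff)
  have 2: "0 \<in> gideal a" by (auto simp: gideal_iff intro!: bexI[of _ 0])
  have 3: "x + y \<in> gideal a \<and> - x \<in> gideal a" if hx: "x \<in> gideal a" and hy: "y \<in> gideal a" for x y
  proof -
    obtain c where c: "c \<in> ZI" "x = a*c" using hx by (auto simp: gideal_iff)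
    obtain d where d: "d \<in> ZI" "y = a*d" using hy by (auto simp: gideal_iff)
    have "x + y = a * (c + d)" "-x = a * (-c)" using c d by (auto simp: distrib_left)
    then show ?thesis using c d unfolding gideal_iff
      by (metis ZI_add ZI_uminus)
  qed
  have 4: "c * x \<in> gideal a" if hx: "x \<in> gideal a" and hc: "c \<in> ZI" for x c
  proof -
    obtain d where d: "d \<in> ZI" "x = a*d" using hx by (auto simp: gideal_iff)
    have "c * x = a * (c * d)" using d by (simp add: mult.left_commute)
    then show ?thesis using d hc by (auto simp: gideal_iff)
  qed
  show ?thesis unfolding is_gideal_def using 1 2 3 4 by blast
qed

lemma gideal_self: "a \<in> ZI \<Longrightarrow> a \<in> gideal a"
  by (auto simp: gideal_iff intro!: bexI[of _ 1])

lemma gideal_sub_iff: "a \<in> ZI \<Longrightarrow> n \<in> ZI \<Longrightarrow> gideal n \<subseteq> gideal a \<longleftrightarrow> (\<exists>c\<in>ZI. n = a*c)"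
proof
  assume "a \<in> ZI" "n \<in> ZI" "gideal n \<subseteq> gideal a"
  then have "n \<in> gideal a" using gideal_self[of n] by blast
  then show "\<exists>c\<in>ZI. n = a*c" by (simp add: gideal_iff)
next
  assume "a \<in> ZI" "n \<in> ZI" "\<exists>c\<in>ZI. n = a*c"
  then obtain c where c: "c \<in> ZI" "n = a*c" by blast
  show "gideal n \<subseteq> gideal a"
  proof
    fix x assume "x \<in> gideal n"
    then obtain d where "d \<in> ZI" "x = n*d" by (auto simp: gideal_iff)
    then have "x = a*(c*d)" "c*d \<in> ZI" using c by (auto simp: mult.assoc)
    then show "x \<in> gideal a" by (auto simp: gideal_iff)
  qed
qed

lemma gideal_1: "gideal 1 = ZI"
  by (auto simp: gideal_iff)

lemma ideal_mult_gideal: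
  assumes "a \<in> ZI" "b \<in> ZI"
  shows "ideal_mult (gideal a) (gideal b) = gideal (a*b)"
proof
  have "is_gideal (gideal (a*b))" using assms by (simp add: is_gideal_gideal)
  moreover have "{x * y |x y. x \<in> gideal a \<and> y \<in> gideal b} \<subseteq> gideal (a*b)"
    by (auto simp: gideal_iff) (metis ZI_mult mult.assoc mult.left_commute)
  ultimately show "ideal_mult (gideal a) (gideal b) \<subseteq> gideal (a*b)"
    unfolding ideal_mult_def by blast
next
  show "gideal (a*b) \<subseteq> ideal_mult (gideal a) (gideal b)"
    unfolding ideal_mult_def
  proof (rule Inter_greatest)
    fix K assume K: "K \<in> {K. is_gideal K \<and> {x * y |x y. x \<in> gideal a \<and> y \<in> gideal b} \<subseteq> K}"
    then have "a*b \<in> K" using gideal_self[OF assms(1)] gideal_self[OF assms(2)] by blast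
    show "gideal (a*b) \<subseteq> K"
    proof
      fix x assume "x \<in> gideal (a*b)"
      then obtain c where c: "c \<in> ZI" "x = (a*b)*c" by (auto simp: gideal_iff)
      have "c * (a*b) \<in> K" using K \<open>a*b \<in> K\<close> c(1) unfolding is_gideal_def by blast
      then show "x \<in> K" using c by (simp add: mult.commute)
    qed
  qed
qed

lemma ideal_pow_gideal: "a \<in> ZI \<Longrightarrow> ideal_pow (gideal a) k = gideal (a^k)"
  by (induction k) (auto simp: gideal_1 ideal_mult_gideal)

definition grel :: "complex set \<Rightarrow> (complex \<times> complex) set" where
  "grel I = {(a, b). a \<in> ZI \<and> b \<in> ZI \<and> a - b \<in> I}"

lemma ideal_norm_grel: "ideal_norm I = real (card (ZI // grel I))"
  by (simp add: ideal_norm_def grel_def)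

lemma equiv_grel: "is_gideal I \<Longrightarrow> equiv ZI (grel I)"
  unfolding equiv_def refl_on_def sym_def trans_def grel_def is_gideal_def
  apply (intro conjI)
     apply auto[2]
   apply clarsimp
   apply (metis minus_diff_eq)
  apply clarsimp
  apply (metis diff_add_cancel add_diff_eq diff_diff_eq2 add.commute)
  done

lemma quot_card_lower:
  assumes "0 \<in> I" "finite (ZI // grel I)"
    and dist: "\<And>j j'. j \<in> {0..m} \<Longrightarrow> j' \<in> {0..m} \<Longrightarrow> j \<noteq> j' \<Longrightarrow> (of_int j - of_int j' :: complex) \<notin> I"
  shows "nat (m+1) \<le> card (ZI // grel I)"
proof -
  let ?f = "\<lambda>j::int. grel I `` {of_int j :: complex}"
  have inj: "inj_on ?f {0..m}"
  proof (rule inj_onI)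
    fix j j' assume j: "j \<in> {0..m}" "j' \<in> {0..m}" and eq: "?f j = ?f j'"
    have "(of_int j', of_int j') \<in> grel I" using assms(1) by (simp add: grel_def)
    then have "of_int j' \<in> ?f j'" by simp
    then have "of_int j' \<in> ?f j" using eq by simp
    then have "(of_int j - of_int j' :: complex) \<in> I" by (simp add: grel_def)
    then show "j = j'" using dist[OF j] by blast
  qed
  have "?f ` {0..m} \<subseteq> ZI // grel I" by (auto intro: quotientI)
  then have "card (?f ` {0..m}) \<le> card (ZI // grel I)" using assms(2) by (rule card_mono[rotated])
  then show ?thesis using card_image[OF inj] by simp
qed

lemma ideal_norm_zero:
  assumes "I \<subseteq> {0}" "0 \<in> I"
  shows "ideal_norm I = 0"
proof (rule ccontr)
  assume "ideal_norm I \<noteq> 0"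
  then have fin: "finite (ZI // grel I)" by (auto simp: ideal_norm_grel card_eq_0_iff)
  have "nat (int (card (ZI // grel I)) + 1) \<le> card (ZI // grel I)"
    by (rule quot_card_lower[OF assms(2) fin]) (use assms(1) in auto)
  then show False by simp
qed

lemma ideal_norm_gideal_lower:
  assumes pi: "p \<in> ZI" "p \<noteq> 0" and pos: "0 < ideal_norm (gideal p)"
  shows "cmod p \<le> ideal_norm (gideal p)"
proof -
  have fin: "finite (ZI // grel (gideal p))" using pos by (auto simp: ideal_norm_grel intro: card_ge_0_finite)
  define m where "m = \<lceil>cmod p\<rceil> - 1"
  have "nat (m+1) \<le> card (ZI // grel (gideal p))"
  proof (rule quot_card_lower[OF _ fin])
    show "0 \<in> gideal p" by (auto simp: gideal_iff intro!: bexI[of _ 0])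
  next
    fix j j' assume j: "j \<in> {0..m}" "j' \<in> {0..m}" "j \<noteq> j'"
    show "(of_int j - of_int j' :: complex) \<notin> gideal p"
    proof
      assume "(of_int j - of_int j' :: complex) \<in> gideal p"
      then obtain c where c: "c \<in> ZI" "of_int (j - j') = p * c" by (auto simp: gideal_iff)
      have "c \<noteq> 0" using c j by auto
      then have "cmod p \<le> cmod p * cmod c" using cmod_ge1[OF c(1)] pi by simp
      also have "\<dots> = cmod (of_int (j - j') :: complex)" using c by (simp add: norm_mult)
      also have "\<dots> = of_int \<bar>j - j'\<bar>" by (simp only: norm_of_int)
      also have "\<dots> \<le> of_int m"
      proof -
        have "\<bar>j - j'\<bar> \<le> m" using j by auto
        then show ?thesis by (simp only: of_int_le_iff)
      qed
      also have "\<dots> < cmod p" unfolding m_def by linarith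
      finally show False by simp
    qed
  qed
  moreover have "cmod p \<le> real (nat (m+1))" unfolding m_def by linarith
  ultimately show ?thesis by (simp add: ideal_norm_grel)
qed

lemma ideal_norm_gideal_upper:
  assumes pi: "p \<in> ZI" "p \<noteq> 0"
  shows "finite (ZI // grel (gideal p)) \<and> ideal_norm (gideal p) \<le> 9 * gnorm p"
proof -
  have eq: "equiv ZI (grel (gideal p))" by (rule equiv_grel[OF is_gideal_gideal[OF pi(1)]])
  let ?B = "{x\<in>ZI. cmod x \<le> cmod p}"
  have sub: "ZI // grel (gideal p) \<subseteq> (\<lambda>x. grel (gideal p) `` {x}) ` ?B"
  proof
    fix X assume "X \<in> ZI // grel (gideal p)"
    then obtain a where a: "a \<in> ZI" "X = grel (gideal p) `` {a}" by (auto elim: quotientE)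
    obtain c where c: "c \<in> ZI" "gnorm (a - p*c) \<le> gnorm p / 2" using ZI_div[OF a(1) pi] by blast
    let ?r = "a - p*c"
    have "gnorm ?r \<le> gnorm p" using c(2) gnorm_nonneg[of p] by linarith
    then have "(cmod ?r)^2 \<le> (cmod p)^2" by (simp only: gnorm_cmod)
    then have "cmod ?r \<le> cmod p" by (rule power2_le_imp_le) simp
    then have rB: "?r \<in> ?B" using a c pi by auto
    have "(a, ?r) \<in> grel (gideal p)" using a c pi by (auto simp: grel_def gideal_iff)
    then have "X = grel (gideal p) `` {?r}" using a(2) equiv_class_eq[OF eq] by simp
    then show "X \<in> (\<lambda>x. grel (gideal p) `` {x}) ` ?B" using rB by blast
  qed
  have finB: "finite ?B" by (rule ZI_box_finite)
  have fin: "finite (ZI // grel (gideal p))" by (rule finite_subset[OF sub finite_imageI[OF finB]])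
  have "card (ZI // grel (gideal p)) \<le> card ((\<lambda>x. grel (gideal p) `` {x}) ` ?B)"
    by (rule card_mono[OF finite_imageI[OF finB] sub])
  also have "\<dots> \<le> card ?B" by (rule card_image_le[OF finB])
  finally have "real (card (ZI // grel (gideal p))) \<le> real (card ?B)" by simp
  also have "\<dots> \<le> (2 * cmod p + 1)^2" by (rule ZI_box_card) simp
  also have "\<dots> \<le> (3 * cmod p)^2" using cmod_ge1[OF pi] by (intro power_mono) auto
  also have "\<dots> = 9 * gnorm p" by (simp add: gnorm_cmod power_mult_distrib)
  finally show ?thesis using fin by (simp add: ideal_norm_grel)
qed



lemma gnorm_nat_floor: "x \<in> ZI \<Longrightarrow> gnorm x = real (nat \<lfloor>gnorm x\<rfloor>)"
  using gnorm_nat[of x] by auto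

lemma prime_principal:
  assumes q: "is_prime_gideal q" and pos: "0 < ideal_norm q"
  shows "\<exists>p\<in>ZI. q = gideal p \<and> 2 \<le> gnorm p"
proof -
  have iq: "is_gideal q" and qZ: "q \<noteq> ZI" using q by (auto simp: is_prime_gideal_def)
  have sub: "q \<subseteq> ZI" and q0: "0 \<in> q" and add: "\<And>a b. a \<in> q \<Longrightarrow> b \<in> q \<Longrightarrow> a + b \<in> q"
    and neg: "\<And>a. a \<in> q \<Longrightarrow> - a \<in> q" and mul: "\<And>a c. a \<in> q \<Longrightarrow> c \<in> ZI \<Longrightarrow> c * a \<in> q"
    using iq by (auto simp: is_gideal_def)
  have "\<exists>x\<in>q. x \<noteq> 0"
  proof (rule ccontr)
    assume "\<not> (\<exists>x\<in>q. x \<noteq> 0)"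
    then have "q \<subseteq> {0}" by auto
    then have "ideal_norm q = 0" using ideal_norm_zero q0 by blast
    then show False using pos by simp
  qed
  then obtain x0 where x0: "x0 \<in> q \<and> x0 \<noteq> 0" by blast
  obtain p where p: "p \<in> q \<and> p \<noteq> 0" and pmin: "\<And>y. y \<in> q \<and> y \<noteq> 0 \<Longrightarrow> nat \<lfloor>gnorm p\<rfloor> \<le> nat \<lfloor>gnorm y\<rfloor>"
    using ex_has_least_nat[of "\<lambda>x. x \<in> q \<and> x \<noteq> 0", OF x0, of "\<lambda>x. nat \<lfloor>gnorm x\<rfloor>"] by blast
  have pZ: "p \<in> ZI" using p sub by auto
  have pmin': "gnorm p \<le> gnorm y" if "y \<in> q" "y \<noteq> 0" for y
  proof -
    have "y \<in> ZI" using that sub by auto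
    then show ?thesis using pmin[of y] that gnorm_nat_floor[OF pZ] gnorm_nat_floor[of y] by simp
  qed
  have eq: "q = gideal p"
  proof
    show "gideal p \<subseteq> q"
    proof
      fix x assume "x \<in> gideal p"
      then obtain c where "c \<in> ZI" "x = p*c" by (auto simp: gideal_iff)
      then show "x \<in> q" using mul[of p c] p by (simp add: mult.commute)
    qed
  next
    show "q \<subseteq> gideal p"
    proof
      fix a assume a: "a \<in> q"
      then have aZ: "a \<in> ZI" using sub by auto
      obtain c where c: "c \<in> ZI" "gnorm (a - p*c) \<le> gnorm p / 2" using ZI_div[OF aZ pZ] p by blast
      have "c * p \<in> q" using mul p c by blast
      then have "a + - (c*p) \<in> q" using add[OF a neg] by blast
      then have rq: "a - p*c \<in> q" by (simp add: mult.commute)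
      have "a - p*c = 0"
      proof (rule ccontr)
        assume "a - p*c \<noteq> 0"
        then have "gnorm p \<le> gnorm (a - p*c)" using pmin' rq by blast
        then have "gnorm p \<le> 0" using c(2) by linarith
        then show False using gnorm_ge1[OF pZ] p by linarith
      qed
      then show "a \<in> gideal p" using c by (auto simp: gideal_iff)
    qed
  qed
  have "2 \<le> gnorm p"
  proof (rule gnorm_ge2[OF pZ], rule ccontr)
    assume "\<not> 1 < gnorm p"
    then have g1: "gnorm p = 1" using gnorm_ge1[OF pZ] p by linarith
    have "cnj p * p = complex_of_real ((cmod p)^2)" using complex_norm_square[of p] by (simp add: mult.commute)
    also have "\<dots> = 1" using g1 by (simp add: gnorm_cmod)
    finally have "cnj p * p = 1" .
    then have oneq: "1 \<in> q" using mul[of p "cnj p"] p pZ by auto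
    have "ZI \<subseteq> q" using mul[OF oneq] by auto
    then show False using sub qZ by blast
  qed
  then show ?thesis using pZ eq by blast
qed

lemma tele_step:
  fixes n t :: real
  assumes "0 \<le> n" "0 < t"
  shows "2 / ((n+1)^2 + t^2) \<le> 4/(n+t) - 4/(n+1+t)"
proof -
  have e: "4/(n+t) - 4/(n+1+t) = 4 / ((n+t)*(n+1+t))" using assms by (simp add: field_simps)
  have "(n+t)*(n+1+t) \<le> (n+1+t)*(n+1+t)" using assms by (intro mult_right_mono) auto
  also have "\<dots> \<le> 2*((n+1)^2 + t^2)"
  proof -
    have "0 \<le> (n+1-t)*(n+1-t)" by simp
    then show ?thesis by (simp add: power2_eq_square algebra_simps)
  qed
  finally have le: "(n+t)*(n+1+t) \<le> 2*((n+1)^2 + t^2)" .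
  have "0 < t^2" using assms by simp
  then have p1: "0 < (n+1)^2 + t^2" by (simp add: add_nonneg_pos)
  have p2: "0 < (n+t)*(n+1+t)" using assms by simp
  have "2 / ((n+1)^2 + t^2) \<le> 4 / ((n+t)*(n+1+t))"
    using p1 p2 le by (simp add: divide_simps)
  then show ?thesis using e by simp
qed

lemma tele_sum:
  assumes s: "1 \<le> s"
  shows "(\<Sum>a\<in>{-int n..int n}. 1/((of_int a)^2 + s)) \<le> 1/s + 4/sqrt s - 4/(real n + sqrt s)"
proof (induction n)
  case 0
  then show ?case by simp
next
  case (Suc n)
  let ?f = "\<lambda>a::int. 1/((of_int a)^2 + s)"
  let ?t = "sqrt s"
  have t: "0 < ?t" "?t^2 = s" using s by auto
  have set: "{-int (Suc n)..int (Suc n)} = insert (-(int n + 1)) (insert (int n + 1) {-int n..int n})" by auto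
  have "(\<Sum>a\<in>{-int (Suc n)..int (Suc n)}. ?f a) = ?f (-(int n + 1)) + (?f (int n + 1) + (\<Sum>a\<in>{-int n..int n}. ?f a))"
    unfolding set by (subst sum.insert; simp)+
  also have "?f (-(int n + 1)) + ?f (int n + 1) = 2 / ((real n + 1)^2 + ?t^2)"
  proof -
    have "(- real n - 1)^2 = (real n + 1)^2" by (simp add: power2_eq_square algebra_simps)
    then show ?thesis using t by simp
  qed
  then have "?f (-(int n + 1)) + (?f (int n + 1) + (\<Sum>a\<in>{-int n..int n}. ?f a)) = 2 / ((real n + 1)^2 + ?t^2) + (\<Sum>a\<in>{-int n..int n}. ?f a)"
    by simp
  also have "\<dots> \<le> (4/(real n + ?t) - 4/(real n + 1 + ?t)) + (1/s + 4/?t - 4/(real n + ?t))"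
    using tele_step[of "real n" ?t] t Suc.IH by (intro add_mono) auto
  also have "\<dots> = 1/s + 4/?t - 4/(real (Suc n) + ?t)" by (simp add: add.commute add.left_commute)
  finally show ?case .
qed

lemma int_sum_bound:
  assumes s: "1 \<le> s"
  shows "(\<Sum>a\<in>{-L..L}. 1/((of_int a)^2 + s)) \<le> 5 / sqrt s"
proof (cases "L < 0")
  case True
  then have "{-L..L} = {}" by auto
  then show ?thesis using s by simp
next
  case False
  then have L: "L = int (nat L)" by simp
  have t: "0 < sqrt s" using s by simp
  have "(\<Sum>a\<in>{-L..L}. 1/((of_int a)^2 + s)) \<le> 1/s + 4/sqrt s - 4/(real (nat L) + sqrt s)"
  proof -
    have h1: "real (nat L) = of_int L" and h2: "int (nat L) = L" using False by simp_all
    show ?thesis using tele_sum[OF s, of "nat L"] by (simp only: h1 h2)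
  qed
  also have "\<dots> \<le> 1/s + 4/sqrt s" using t by simp
  also have "1/s \<le> 1/sqrt s"
  proof -
    have "1 \<le> sqrt s" using s by simp
    then have "sqrt s * 1 \<le> sqrt s * sqrt s" by (intro mult_left_mono) auto
    then have "sqrt s \<le> s" using s by simp
    then show ?thesis using t by (simp add: frac_le)
  qed
  then have "1/s + 4/sqrt s \<le> 5/sqrt s" by simp
  finally show ?thesis .
qed

lemma geom_bound:
  fixes x :: real
  assumes "0 \<le> x" "x \<le> 1/2"
  shows "(\<Sum>k\<in>{2..K}. x^k) \<le> 2 * x^2"
proof -
  have claim: "(\<Sum>k\<in>{2..Suc K}. x^k) \<le> 2*x^2 - 2*x^(K+2)" for K
  proof (induction K)
    case 0
    then show ?case by (simp add: power2_eq_square)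
  next
    case (Suc K)
    have set: "{2..Suc (Suc K)} = insert (Suc (Suc K)) {2..Suc K}" by auto
    have "(\<Sum>k\<in>{2..Suc (Suc K)}. x^k) = x^(K+2) + (\<Sum>k\<in>{2..Suc K}. x^k)"
      unfolding set by (subst sum.insert) auto
    also have "\<dots> \<le> x^(K+2) + (2*x^2 - 2*x^(K+2))" using Suc.IH by simp
    also have "\<dots> \<le> 2*x^2 - 2*x^(Suc K+2)"
    proof -
      have "x^(Suc K + 2) = x * x^(K+2)" by simp
      moreover have "x * x^(K+2) \<le> (1/2) * x^(K+2)" using assms by (intro mult_right_mono) auto
      ultimately show ?thesis by linarith
    qed
    finally show ?case .
  qed
  show ?thesis
  proof (cases K)
    case 0
    then show ?thesis by simp
  next
    case (Suc K')
    then show ?thesis using claim[of K'] assms by (smt (verit) zero_le_power)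
  qed
qed



lemma amgm_aux:
  fixes u v N :: real
  assumes "0 < u" "0 < v" "u + v \<le> 2*N"
  shows "1 / N^2 \<le> 1/u * (1/v)"
proof -
  have "0 \<le> (u - v)*(u - v)" by simp
  then have "4*(u*v) \<le> (u+v)*(u+v)" by (simp add: algebra_simps)
  also have "\<dots> \<le> (2*N)*(2*N)" using assms by (intro mult_mono) auto
  finally have "u*v \<le> N^2" by (simp add: power2_eq_square)
  then have "1/N^2 \<le> 1/(u*v)" using assms by (intro divide_left_mono) auto
  then show ?thesis by simp
qed

lemma pair_sum:
  assumes F: "finite F" "F \<subseteq> ZI" and w: "2 \<le> w" and ge: "\<And>x. x \<in> F \<Longrightarrow> w \<le> gnorm x"
  shows "(\<Sum>x\<in>F. 1/(gnorm x)^2) \<le> 50/w"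
proof -
  define s where "s = w/2"
  have s: "1 \<le> s" using w by (simp add: s_def)
  define f where "f = (\<lambda>a::int. 1/((of_int a)^2 + s))"
  define \<phi> where "\<phi> = (\<lambda>x. 1/((Re x)^2 + s) * (1/((Im x)^2 + s)))"
  define B where "B = (\<Sum>x\<in>F. cmod x)"
  define j where "j = (\<lambda>(a,b). Complex (of_int a) (of_int b))"
  let ?box = "{-\<lfloor>B\<rfloor>..\<lfloor>B\<rfloor>} \<times> {-\<lfloor>B\<rfloor>..\<lfloor>B\<rfloor>}"
  have pt: "1/(gnorm x)^2 \<le> \<phi> x" if "x \<in> F" for x
  proof -
    have "w \<le> gnorm x" using ge that by blast
    then have "((Re x)^2 + s) + ((Im x)^2 + s) \<le> 2 * gnorm x" by (simp add: gnorm_def s_def)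
    then show ?thesis unfolding \<phi>_def using s by (intro amgm_aux) (auto intro: add_nonneg_pos)
  qed
  have Fsub: "F \<subseteq> j ` ?box"
  proof -
    have "F \<subseteq> {x\<in>ZI. cmod x \<le> B}"
      using F by (auto simp: B_def intro!: member_le_sum)
    then show ?thesis using ZI_box_sub[of B] by (auto simp: j_def)
  qed
  have inj: "inj_on j ?box" by (auto simp: j_def inj_on_def)
  have phinn: "0 \<le> \<phi> x" for x using s unfolding \<phi>_def
    by (intro mult_nonneg_nonneg) (auto intro: add_nonneg_nonneg)
  have "(\<Sum>x\<in>F. 1/(gnorm x)^2) \<le> (\<Sum>x\<in>F. \<phi> x)" by (rule sum_mono) (rule pt)
  also have "\<dots> \<le> (\<Sum>x\<in>j ` ?box. \<phi> x)"
    by (rule sum_mono2[OF _ Fsub]) (auto simp: phinn)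
  also have "\<dots> = (\<Sum>p\<in>?box. \<phi> (j p))" using sum.reindex[OF inj, of \<phi>] by (simp add: comp_def)
  also have "\<dots> = (\<Sum>(a,b)\<in>?box. f a * f b)"
    by (rule sum.cong) (auto simp: \<phi>_def f_def j_def)
  also have "\<dots> = (\<Sum>a\<in>{-\<lfloor>B\<rfloor>..\<lfloor>B\<rfloor>}. f a) * (\<Sum>b\<in>{-\<lfloor>B\<rfloor>..\<lfloor>B\<rfloor>}. f b)"
    by (simp add: sum.cartesian_product sum_product)
  also have "\<dots> \<le> (5 / sqrt s) * (5 / sqrt s)"
  proof -
    have "(\<Sum>a\<in>{-\<lfloor>B\<rfloor>..\<lfloor>B\<rfloor>}. f a) \<le> 5 / sqrt s" unfolding f_def by (rule int_sum_bound[OF s])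
    moreover have "0 \<le> (\<Sum>a\<in>{-\<lfloor>B\<rfloor>..\<lfloor>B\<rfloor>}. f a)" unfolding f_def using s
      by (intro sum_nonneg) (auto intro: add_nonneg_nonneg)
    ultimately show ?thesis using s by (intro mult_mono) auto
  qed
  also have "\<dots> = 50 / w" using s by (simp add: s_def)
  finally show ?thesis .
qed



lemma Aset_props:
  assumes NN: "NN \<in> ZI" and n: "n \<in> Aset NN"
  shows "n \<in> ZI \<and> n \<noteq> 0 \<and> cmod n < 2 * cmod NN"
proof -
  obtain p where p: "n = NN - p" "p \<in> Pset NN" "gnorm p < gnorm NN" using n by (auto simp: Aset_def)
  have pZ: "p \<in> ZI" using p(2) by (simp add: Pset_def gprime_def)
  have "(cmod p)^2 < (cmod NN)^2" using p(3) by (simp add: gnorm_cmod)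
  then have lt: "cmod p < cmod NN" by (rule power_less_imp_less_base) simp
  have "p \<noteq> NN" using p(3) by auto
  moreover have "cmod n \<le> cmod NN + cmod p" unfolding p(1) by (rule norm_triangle_ineq4)
  ultimately show ?thesis using p(1) pZ NN lt by auto
qed

lemma Aset_finite: "NN \<in> ZI \<Longrightarrow> finite (Aset NN)"
  by (rule finite_subset[OF _ ZI_box_finite[of "2 * cmod NN"]]) (auto dest: Aset_props)

lemma Q_finite:
  assumes z: "0 < z"
  shows "finite {q. is_prime_gideal q \<and> z \<le> ideal_norm q \<and> ideal_norm q < y}"
proof -
  have "{q. is_prime_gideal q \<and> z \<le> ideal_norm q \<and> ideal_norm q < y} \<subseteq> gideal ` {p\<in>ZI. cmod p \<le> y}"
  proof
    fix q assume q: "q \<in> {q. is_prime_gideal q \<and> z \<le> ideal_norm q \<and> ideal_norm q < y}"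
    then have pos: "0 < ideal_norm q" using z by auto
    obtain p where p: "p \<in> ZI" "q = gideal p" "2 \<le> gnorm p" using prime_principal[OF _ pos] q by blast
    have "p \<noteq> 0" using p(3) by (auto simp: gnorm_def)
    then have "cmod p \<le> ideal_norm q" using ideal_norm_gideal_lower[OF p(1)] pos p(2) by simp
    then show "q \<in> gideal ` {p\<in>ZI. cmod p \<le> y}" using q p by auto
  qed
  then show ?thesis by (rule finite_subset) (simp add: ZI_box_finite)
qed

lemma exp_bound:
  assumes p: "p \<in> ZI" "2 \<le> gnorm p" and n: "n \<in> ZI" "n \<noteq> 0" "gnorm n < real K"
    and sub: "gideal n \<subseteq> gideal p"
  shows "real (ideal_exp (gideal p) n) - 1 \<le> real (card {k\<in>{2..K}. \<exists>c\<in>ZI. n = p^k*c})"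
proof -
  define P where "P = (\<lambda>k. gideal n \<subseteq> ideal_pow (gideal p) k)"
  have Piff: "P k \<longleftrightarrow> (\<exists>c\<in>ZI. n = p^k*c)" for k
  proof -
    have "P k \<longleftrightarrow> gideal n \<subseteq> gideal (p^k)" unfolding P_def by (simp only: ideal_pow_gideal[OF p(1)])
    also have "\<dots> \<longleftrightarrow> (\<exists>c\<in>ZI. n = p^k*c)" by (rule gideal_sub_iff) (use p n in auto)
    finally show ?thesis .
  qed
  have bnd: "k \<le> K" if hk: "P k" for k
  proof -
    obtain c where c: "c \<in> ZI" "n = p^k*c" using hk Piff[of k] by blast
    have "c \<noteq> 0" using c n by auto
    then have "1 \<le> gnorm c" using gnorm_ge1 c by blast
    have "(2::real)^k \<le> gnorm p ^ k" using p by (intro power_mono) auto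
    also have "\<dots> \<le> gnorm p ^ k * gnorm c" using \<open>1 \<le> gnorm c\<close> gnorm_nonneg[of p]
      by (simp add: mult_le_cancel_left1)
    also have "\<dots> = gnorm n" using c by (simp add: gnorm_mult gnorm_power)
    finally have "(2::real)^k < real K" using n by linarith
    moreover have "real k < 2^k"
    proof -
      have "k < 2^k" by simp
      then have "real k < real (2^k)" by (simp only: of_nat_less_iff)
      then show ?thesis by simp
    qed
    ultimately have "real k < real K" by linarith
    then show ?thesis by simp
  qed
  define e where "e = ideal_exp (gideal p) n"
  have e_def': "e = Greatest P" by (simp add: e_def ideal_exp_def P_def)
  have P1: "P 1" unfolding P_def using sub by (simp only: ideal_pow_gideal[OF p(1)] power_one_right)
  have Pe: "P e" using GreatestI_nat[of P 1 K] P1 bnd e_def' by simp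
  have e1: "1 \<le> e" using Greatest_le_nat[of P 1 K] P1 bnd e_def' by simp
  have eK: "e \<le> K" using bnd Pe by simp
  have "{2..e} \<subseteq> {k\<in>{2..K}. \<exists>c\<in>ZI. n = p^k*c}"
  proof
    fix k assume k: "k \<in> {2..e}"
    obtain c where c: "c \<in> ZI" "n = p^e*c" using Pe Piff[of e] by blast
    have "n = p^k * (p^(e-k)*c)" using c k by (simp add: mult.assoc power_add[symmetric])
    moreover have "p^(e-k)*c \<in> ZI" using c p by simp
    ultimately show "k \<in> {k\<in>{2..K}. \<exists>c\<in>ZI. n = p^k*c}" using k eK by auto
  qed
  then have "card {2..e} \<le> card {k\<in>{2..K}. \<exists>c\<in>ZI. n = p^k*c}" by (intro card_mono) auto
  then have "e - 1 \<le> card {k\<in>{2..K}. \<exists>c\<in>ZI. n = p^k*c}" by simp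
  then show ?thesis using e1 unfolding e_def[symmetric] by linarith
qed



lemma card_filter_sum:
  assumes "finite A"
  shows "real (card {x\<in>A. P x}) = (\<Sum>x\<in>A. if P x then 1 else 0)"
proof -
  have "real (card {x\<in>A. P x}) = (\<Sum>x\<in>{x\<in>A. P x}. 1)" by (rule real_of_card)
  also have "\<dots> = (\<Sum>x\<in>A. if P x then 1 else 0)" by (rule sum.inter_filter[OF assms])
  finally show ?thesis .
qed

lemma perq:
  assumes NN: "NN \<in> ZI" and p: "p \<in> ZI" "2 \<le> gnorm p" and qp: "q = gideal p" and S: "S \<subseteq> Aset NN"
  shows "(\<Sum>n\<in>{n. n \<in> S \<and> gideal n \<subseteq> q}. real (ideal_exp q n) - 1) \<le> 72 * gnorm NN / (gnorm p)^2"
  unfolding qp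
proof -
  define G where "G = gnorm NN"
  define K where "K = nat \<lceil>4*G\<rceil>"
  define S' where "S' = {n. n \<in> S \<and> gideal n \<subseteq> gideal p}"
  define D where "D = (\<lambda>k n. \<exists>c\<in>ZI. n = p^k*c)"
  have finS': "finite S'" unfolding S'_def
    by (rule finite_subset[OF _ Aset_finite[OF NN]]) (use S in auto)
  have nprops: "n \<in> ZI \<and> n \<noteq> 0 \<and> cmod n < 2 * cmod NN \<and> gnorm n < real K" if "n \<in> S'" for n
  proof -
    have h: "n \<in> ZI \<and> n \<noteq> 0 \<and> cmod n < 2 * cmod NN" using Aset_props[OF NN] that S by (auto simp: S'_def)
    then have "(cmod n)^2 < (2 * cmod NN)^2" by (intro power_strict_mono) auto
    then have "gnorm n < 4 * G" by (simp add: gnorm_cmod G_def power_mult_distrib)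
    also have "4 * G \<le> real K" unfolding K_def by linarith
    finally show ?thesis using h by simp
  qed
  have p0: "p \<noteq> 0" using p by (auto simp: gnorm_def)
  have "(\<Sum>n\<in>S'. real (ideal_exp (gideal p) n) - 1) \<le> (\<Sum>n\<in>S'. real (card {k\<in>{2..K}. D k n}))"
  proof (rule sum_mono)
    fix n assume n: "n \<in> S'"
    then have sub: "gideal n \<subseteq> gideal p" by (simp add: S'_def)
    show "real (ideal_exp (gideal p) n) - 1 \<le> real (card {k\<in>{2..K}. D k n})"
    proof -
      have h: "n \<in> ZI" "n \<noteq> 0" "gnorm n < real K" using nprops[OF n] by auto
      show ?thesis unfolding D_def by (rule exp_bound[OF p h sub])
    qed
  qed
  also have "\<dots> = (\<Sum>n\<in>S'. \<Sum>k\<in>{2..K}. if D k n then 1 else 0)"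
    by (rule sum.cong[OF refl], rule card_filter_sum) simp
  also have "\<dots> = (\<Sum>k\<in>{2..K}. \<Sum>n\<in>S'. if D k n then 1 else 0)" by (rule sum.swap)
  also have "\<dots> = (\<Sum>k\<in>{2..K}. real (card {n\<in>S'. D k n}))"
    using finS' by (simp add: card_filter_sum)
  also have "\<dots> \<le> (\<Sum>k\<in>{2..K}. 36 * G * (1 / gnorm p)^k)"
  proof (rule sum_mono)
    fix k
    let ?M = "{n\<in>ZI. n \<noteq> 0 \<and> cmod n < 2 * cmod NN \<and> (\<exists>c\<in>ZI. n = p^k*c)}"
    have finM: "finite ?M" by (rule finite_subset[OF _ ZI_box_finite[of "2 * cmod NN"]]) auto
    have "card {n\<in>S'. D k n} \<le> card ?M"
    proof (rule card_mono[OF finM], rule subsetI)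
      fix n assume "n \<in> {n\<in>S'. D k n}"
      then have "n \<in> S'" "D k n" by auto
      then show "n \<in> ?M" using nprops[of n] unfolding D_def by blast
    qed
    then have "real (card {n\<in>S'. D k n}) \<le> real (card ?M)" by simp
    also have "\<dots> \<le> 9 * (2 * cmod NN)^2 / gnorm (p^k)"
      by (rule mult_count) (use p p0 in auto)
    also have "\<dots> = 36 * G * (1 / gnorm p)^k"
    proof -
      have "(2 * cmod NN)^2 = 4*G" by (simp add: G_def gnorm_cmod power_mult_distrib)
      then show ?thesis by (simp add: gnorm_power power_one_over)
    qed
    finally show "real (card {n\<in>S'. D k n}) \<le> 36 * G * (1 / gnorm p)^k" .
  qed
  also have "\<dots> = 36 * G * (\<Sum>k\<in>{2..K}. (1 / gnorm p)^k)" by (simp add: sum_distrib_left)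
  also have "\<dots> \<le> 36 * G * (2 * (1 / gnorm p)^2)"
  proof -
    have "(\<Sum>k\<in>{2..K}. (1 / gnorm p)^k) \<le> 2 * (1 / gnorm p)^2"
      using p by (intro geom_bound) auto
    moreover have "0 \<le> G" by (simp add: G_def gnorm_nonneg)
    ultimately show ?thesis by (intro mult_left_mono) auto
  qed
  also have "\<dots> = 72 * gnorm NN / (gnorm p)^2" by (simp add: G_def power_one_over)
  finally have "(\<Sum>n\<in>S'. real (ideal_exp (gideal p) n) - 1) \<le> 72 * gnorm NN / (gnorm p)^2" .
  then show "(\<Sum>n\<in>{n. n \<in> S \<and> gideal n \<subseteq> gideal p}. real (ideal_exp (gideal p) n) - 1) \<le> 72 * gnorm NN / (gnorm p)^2"
    by (simp only: S'_def)
qed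



theorem lemma3p2:
  "\<exists>C::real. \<forall>(NN::complex) (y::real) (z::real).
     NN \<in> ZI \<and> NN \<noteq> 0 \<and> 2 \<le> z \<and> z \<le> y \<longrightarrow>
     T1 NN z y \<le>
       (\<Sum>q\<in>{q. is_prime_gideal q \<and> z \<le> ideal_norm q \<and> ideal_norm q < y}.
          real (sift (Aq NN q) NN z)) + C * gnorm NN / z"
proof (intro exI allI impI)
  fix NN :: complex and y z :: real
  assume H: "NN \<in> ZI \<and> NN \<noteq> 0 \<and> 2 \<le> z \<and> z \<le> y"
  then have NN: "NN \<in> ZI" and z: "2 \<le> z" by auto
  define A' where "A' = {n \<in> Aset NN. ideal_sum (gideal n) (PP NN z) = ZI}"
  define Q where "Q = {q. is_prime_gideal q \<and> z \<le> ideal_norm q \<and> ideal_norm q < y}"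
  define gen where "gen = (\<lambda>q. SOME p. p \<in> ZI \<and> q = gideal p \<and> 2 \<le> gnorm p)"
  define e where "e = (\<lambda>q n. real (ideal_exp q n))"
  define G where "G = gnorm NN"
  have finA': "finite A'" unfolding A'_def using Aset_finite[OF NN] by simp
  have A'sub: "A' \<subseteq> Aset NN" unfolding A'_def by auto
  have finQ: "finite Q" unfolding Q_def by (rule Q_finite) (use z in simp)
  have genp: "gen q \<in> ZI \<and> q = gideal (gen q) \<and> 2 \<le> gnorm (gen q)" if hq: "q \<in> Q" for q
  proof -
    have pos: "0 < ideal_norm q" using hq z by (simp add: Q_def)
    have "\<exists>p. p \<in> ZI \<and> q = gideal p \<and> 2 \<le> gnorm p" using prime_principal[OF _ pos] hq by (auto simp: Q_def)
    then show ?thesis unfolding gen_def by (rule someI_ex)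
  qed
  have genz: "z / 9 \<le> gnorm (gen q)" if hq: "q \<in> Q" for q
  proof -
    have g: "gen q \<in> ZI" "q = gideal (gen q)" "2 \<le> gnorm (gen q)" using genp[OF hq] by auto
    have "gen q \<noteq> 0" using g(3) by (auto simp: gnorm_def)
    then have "ideal_norm (gideal (gen q)) \<le> 9 * gnorm (gen q)" using ideal_norm_gideal_upper[OF g(1)] by blast
    moreover have "z \<le> ideal_norm (gideal (gen q))" using hq g(2) by (simp add: Q_def)
    ultimately show ?thesis by linarith
  qed
  have T1eq: "T1 NN z y = (\<Sum>n\<in>A'. \<Sum>q\<in>{q. q \<in> Q \<and> gideal n \<subseteq> q}. e q n)"
    unfolding T1_def A'_def Q_def e_def by (simp add: conj_assoc)
  also have "\<dots> = (\<Sum>q\<in>Q. \<Sum>n\<in>{n. n \<in> A' \<and> gideal n \<subseteq> q}. e q n)"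
    by (rule sum.swap_restrict[OF finA' finQ])
  finally have T1eq': "T1 NN z y = (\<Sum>q\<in>Q. \<Sum>n\<in>{n. n \<in> A' \<and> gideal n \<subseteq> q}. e q n)" .
  have RHSeq: "(\<Sum>q\<in>Q. real (sift (Aq NN q) NN z)) = (\<Sum>q\<in>Q. \<Sum>n\<in>{n. n \<in> A' \<and> gideal n \<subseteq> q}. 1)"
  proof (rule sum.cong[OF refl])
    fix q assume "q \<in> Q"
    have "{n \<in> Aq NN q. ideal_sum (gideal n) (PP NN z) = ZI} = {n. n \<in> A' \<and> gideal n \<subseteq> q}"
      by (auto simp: Aq_def A'_def)
    then show "real (sift (Aq NN q) NN z) = (\<Sum>n\<in>{n. n \<in> A' \<and> gideal n \<subseteq> q}. 1)"
      by (simp only: sift_def real_of_card)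
  qed
  have diff: "T1 NN z y - (\<Sum>q\<in>Q. real (sift (Aq NN q) NN z))
      = (\<Sum>q\<in>Q. \<Sum>n\<in>{n. n \<in> A' \<and> gideal n \<subseteq> q}. e q n - 1)"
    unfolding T1eq' RHSeq by (simp add: sum_subtractf)
  also have "\<dots> \<le> (\<Sum>q\<in>Q. 72 * G * (1 / (gnorm (gen q))^2))"
  proof (rule sum_mono)
    fix q assume hq: "q \<in> Q"
    have g: "gen q \<in> ZI" "q = gideal (gen q)" "2 \<le> gnorm (gen q)" using genp[OF hq] by auto
    show "(\<Sum>n\<in>{n. n \<in> A' \<and> gideal n \<subseteq> q}. e q n - 1) \<le> 72 * G * (1 / (gnorm (gen q))^2)"
      using perq[OF NN g(1) g(3) g(2) A'sub] by (simp add: e_def G_def)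
  qed
  also have "\<dots> = 72 * G * (\<Sum>q\<in>Q. 1 / (gnorm (gen q))^2)" by (simp add: sum_distrib_left)
  also have "(\<Sum>q\<in>Q. 1 / (gnorm (gen q))^2) = (\<Sum>p\<in>gen ` Q. 1 / (gnorm p)^2)"
  proof -
    have "inj_on gen Q"
    proof (rule inj_onI)
      fix q1 q2 assume "q1 \<in> Q" "q2 \<in> Q" "gen q1 = gen q2"
      then show "q1 = q2" using genp by metis
    qed
    then show ?thesis by (simp add: sum.reindex)
  qed
  also have "(\<Sum>p\<in>gen ` Q. 1 / (gnorm p)^2) \<le> 50 / max 2 (z/9)"
  proof (rule pair_sum)
    show "finite (gen ` Q)" using finQ by simp
    show "gen ` Q \<subseteq> ZI" using genp by auto
    show "2 \<le> max 2 (z/9)" by simp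
    fix x assume "x \<in> gen ` Q"
    then obtain q where "q \<in> Q" "x = gen q" by blast
    then show "max 2 (z/9) \<le> gnorm x" using genp genz by auto
  qed
  then have "72 * G * (\<Sum>p\<in>gen ` Q. 1 / (gnorm p)^2) \<le> 72 * G * (50 / max 2 (z/9))"
    by (intro mult_left_mono) (auto simp: G_def gnorm_nonneg)
  also have "50 / max 2 (z/9) \<le> 450 / z"
  proof -
    have "z/9 \<le> max 2 (z/9)" by simp
    then have "50 / max 2 (z/9) \<le> 50 / (z/9)" using z by (intro divide_left_mono) auto
    then show ?thesis by simp
  qed
  then have "72 * G * (50 / max 2 (z/9)) \<le> 72 * G * (450 / z)"
    by (intro mult_left_mono) (auto simp: G_def gnorm_nonneg)
  finally have "T1 NN z y - (\<Sum>q\<in>Q. real (sift (Aq NN q) NN z)) \<le> 32400 * gnorm NN / z"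
    by (simp add: G_def)
  then show "T1 NN z y \<le> (\<Sum>q\<in>{q. is_prime_gideal q \<and> z \<le> ideal_norm q \<and> ideal_norm q < y}.
          real (sift (Aq NN q) NN z)) + 32400 * gnorm NN / z"
    unfolding Q_def by linarith
qed


end
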